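(* Let $C=\mathbb{S}^1\times\mathbb{R}$ be the flat Euclidean cylinder, $\theta_0\in\mathbb{S}^1$, $v=\{\theta_0\}\times\mathbb{R}$, and let $f:C\to C$ be a geodesic-preserving bijection with $f(v)=v$, $f(\theta_0,0)=(\theta_0,0)$ and $f(\theta_0,1)=(\theta_0,1)$. Then $f$ maps vertical geodesics to vertical geodesics and slant geodesics to slant geodesics.
   Context: $C$ carries the product of the flat metric on $\mathbb{S}^1=\mathbb{R}/\mathbb{Z}$ and the standard metric on $\mathbb{R}$. A geodesic is the image of a locally isometric immersion of the whole real line; a bijection (not assumed continuous) is geodesic-preserving if it maps every geodesic onto a geodesic as a set. Vertical geodesics are the lines $\{\theta\}\times\mathbb{R}$, horizontal geodesics are the circles $\mathbb{S}^1\times\{r\}$, and slant geodesics are all other geodesics. *)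

theory Defs
  imports "HOL-Analysis.Analysis"
begin

text \<open>The flat cylinder C = S^1 x R with S^1 = R/Z.  A point of S^1 is represented
by its unique representative in [0,1); so C is the carrier set
[0,1) x R inside real x real.\<close>

definition cyl :: "(real \<times> real) set" where
  "cyl = {0..<1} \<times> UNIV"

definition circ_dist :: "real \<Rightarrow> real \<Rightarrow> real" where
  "circ_dist a b = min \<bar>a - b\<bar> (1 - \<bar>a - b\<bar>)"

definition cyl_dist :: "real \<times> real \<Rightarrow> real \<times> real \<Rightarrow> real" where
  "cyl_dist p q = sqrt ((circ_dist (fst p) (fst q))\<^sup>2 + (snd p - snd q)\<^sup>2)"

definition local_isometry_line :: "(real \<Rightarrow> real \<times> real) \<Rightarrow> bool" where
  "local_isometry_line \<gamma> \<longleftrightarrow> range \<gamma> \<subseteq> cyl \<and>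
     (\<forall>t. \<exists>e>0. \<forall>s s'. \<bar>s - t\<bar> < e \<and> \<bar>s' - t\<bar> < e \<longrightarrow>
         cyl_dist (\<gamma> s) (\<gamma> s') = \<bar>s - s'\<bar>)"

definition geodesic :: "(real \<times> real) set \<Rightarrow> bool" where
  "geodesic G \<longleftrightarrow> (\<exists>\<gamma>. local_isometry_line \<gamma> \<and> G = range \<gamma>)"

definition vertical :: "(real \<times> real) set \<Rightarrow> bool" where
  "vertical G \<longleftrightarrow> (\<exists>\<theta>\<in>{0..<1}. G = {\<theta>} \<times> UNIV)"

definition horizontal :: "(real \<times> real) set \<Rightarrow> bool" where
  "horizontal G \<longleftrightarrow> (\<exists>r. G = {0..<1} \<times> {r})"

definition slant :: "(real \<times> real) set \<Rightarrow> bool" where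
  "slant G \<longleftrightarrow> geodesic G \<and> \<not> vertical G \<and> \<not> horizontal G"

definition geodesic_preserving :: "(real \<times> real \<Rightarrow> real \<times> real) \<Rightarrow> bool" where
  "geodesic_preserving f \<longleftrightarrow> bij_betw f cyl cyl \<and>
     (\<forall>G. geodesic G \<longrightarrow> geodesic (f ` G))"

end

theory Submission
  imports Defs
begin

lemma loc_const:
  fixes g :: "real \<Rightarrow> real"
  assumes "\<And>t. \<exists>e>0. \<forall>s. \<bar>s-t\<bar> < e \<longrightarrow> g s = g t"
  shows "g x = g y"
proof -
  have "DERIV g t :> 0" for t
  proof -
    obtain e where e: "e>0" "\<forall>s. \<bar>s-t\<bar> < e \<longrightarrow> g s = g t" using assms by blast
    have d: "((\<lambda>_. g t) has_field_derivative 0) (at t)" by (rule DERIV_const)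
    have "\<forall>s\<in>ball t e. g t = g s"
    proof
      fix s assume "s \<in> ball t e"
      then have "\<bar>s-t\<bar> < e" by (simp add: dist_real_def abs_minus_commute)
      then show "g t = g s" using e by metis
    qed
    then show ?thesis
      using has_field_derivative_transform_within_open[OF d open_ball, of t e g] e(1) by simp
  qed
  then show ?thesis using DERIV_isconst_all by metis
qed
lemma canc: "(h::real) > 0 \<Longrightarrow> h *\<^sub>R (a::'a::real_vector) = h *\<^sub>R b \<Longrightarrow> a = b" by simp

lemma three:
  fixes P :: "real \<Rightarrow> real \<times> real"
  assumes "\<And>s s'. s\<in>I \<Longrightarrow> s'\<in>I \<Longrightarrow> dist (P s) (P s') = \<bar>s-s'\<bar>"
    and "p\<in>I" "q\<in>I" "w\<in>I" "p<q" "q<w"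
  shows "(w-q) *\<^sub>R (P q - P p) = (q-p) *\<^sub>R (P w - P q)"
proof -
  define x where "x = P q - P p"
  define y where "y = P w - P q"
  have nx: "norm x = q - p" using assms(1)[of q p] assms unfolding x_def dist_norm by auto
  have ny: "norm y = w - q" using assms(1)[of w q] assms unfolding y_def dist_norm by auto
  have "x + y = P w - P p" unfolding x_def y_def by simp
  then have "norm (x+y) = w - p" using assms(1)[of w p] assms unfolding dist_norm by auto
  then have "norm (x+y) = norm x + norm y" using nx ny by simp
  then have "norm x *\<^sub>R y = norm y *\<^sub>R x" using norm_triangle_eq by blast
  then show ?thesis using nx ny unfolding x_def y_def by simp
qed

lemma line:
  fixes P :: "real \<Rightarrow> real \<times> real"
  assumes iso: "\<And>s s'. \<bar>s-t\<bar><e \<Longrightarrow> \<bar>s'-t\<bar><e \<Longrightarrow> dist (P s) (P s') = \<bar>s-s'\<bar>"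
    and e: "e>0"
  shows "\<exists>u. norm u = 1 \<and> (\<forall>s. \<bar>s-t\<bar><e \<longrightarrow> P s = P t + (s-t) *\<^sub>R u)"
proof -
  define I where "I = {s. \<bar>s-t\<bar><e}"
  have isoI: "\<And>s s'. s\<in>I \<Longrightarrow> s'\<in>I \<Longrightarrow> dist (P s) (P s') = \<bar>s-s'\<bar>" using iso I_def by auto
  define h where "h = e/2"
  have h: "h>0" "t+h \<in> I" "t \<in> I" using e unfolding h_def I_def by auto
  define u where "u = (1/h) *\<^sub>R (P (t+h) - P t)"
  have hu: "P (t+h) - P t = h *\<^sub>R u" using h unfolding u_def by simp
  have "norm u = 1" using isoI[OF h(2,3)] h unfolding u_def dist_norm by simp
  moreover have "P s = P t + (s-t) *\<^sub>R u" if "s \<in> I" for s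
  proof -
    consider "s = t" | "s < t" | "t < s" "s < t+h" | "s = t+h" | "t+h < s" by linarith
    then show ?thesis
    proof cases
      case 1 then show ?thesis by simp
    next
      case 2
      have "(t+h-t) *\<^sub>R (P t - P s) = (t-s) *\<^sub>R (P (t+h) - P t)"
        using three[OF isoI that h(3) h(2)] 2 h by simp
      then have "h *\<^sub>R (P t - P s) = h *\<^sub>R ((t-s) *\<^sub>R u)" using hu by simp
      then have "P t - P s = (t-s) *\<^sub>R u" using h(1) canc by blast
      then show ?thesis by (simp add: algebra_simps)
    next
      case 3
      have "(t+h-s) *\<^sub>R (P s - P t) = (s-t) *\<^sub>R (P (t+h) - P s)"
        using three[OF isoI h(3) that h(2)] 3 h by simp
      moreover have "P (t+h) - P s = h *\<^sub>R u - (P s - P t)" using hu by (simp add: algebra_simps)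
      ultimately have "(t+h-s) *\<^sub>R (P s - P t) = (s-t) *\<^sub>R (h *\<^sub>R u - (P s - P t))" by simp
      then have "h *\<^sub>R (P s - P t) = h *\<^sub>R ((s-t) *\<^sub>R u)"
        by (simp add: algebra_simps)
      then have "P s - P t = (s-t) *\<^sub>R u" using h(1) canc by blast
      then show ?thesis by (simp add: algebra_simps)
    next
      case 4 then show ?thesis using hu by (simp add: algebra_simps)
    next
      case 5
      have "(s-(t+h)) *\<^sub>R (P (t+h) - P t) = (t+h-t) *\<^sub>R (P s - P (t+h))"
        using three[OF isoI h(3) h(2) that] 5 h by simp
      then have "h *\<^sub>R ((s-(t+h)) *\<^sub>R u) = h *\<^sub>R (P s - P (t+h))" using hu by (simp add: mult.commute)
      then have "P s - P (t+h) = (s-(t+h)) *\<^sub>R u" using h(1) canc by metis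
      then have "P s = P t + h *\<^sub>R u + (s-(t+h)) *\<^sub>R u" using hu by (simp add: algebra_simps)
      then show ?thesis by (simp add: algebra_simps)
    qed
  qed
  ultimately show ?thesis unfolding I_def by blast
qed



lemma cd_int:
  assumes "a \<in> {0..<1}" "b \<in> {0..<1}" "\<bar>a - b - of_int k\<bar> \<le> 1/2"
  shows "circ_dist a b = \<bar>a - b - of_int k\<bar>"
proof -
  have "\<bar>of_int k :: real\<bar> < 3/2" using assms by (auto simp: abs_if split: if_split_asm)
  then have "k \<in> {-1,0,1}" by auto
  then show ?thesis using assms unfolding circ_dist_def by (auto simp: abs_if min_def)
qed

lemma cd_nonneg: "a \<in> {0..<1} \<Longrightarrow> b \<in> {0..<1} \<Longrightarrow> 0 \<le> circ_dist a b"
  unfolding circ_dist_def by auto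

lemma local_affine:
  assumes "local_isometry_line \<gamma>"
  shows "\<exists>e>0. \<exists>a b. a\<^sup>2 + b\<^sup>2 = 1 \<and> (\<forall>s. \<bar>s-t\<bar> < e \<longrightarrow>
           snd (\<gamma> s) = snd (\<gamma> t) + b*(s-t) \<and> fst (\<gamma> s) = frac (fst (\<gamma> t) + a*(s-t)))"
proof -
  have rng: "fst (\<gamma> s) \<in> {0..<1}" for s
  proof -
    have "\<gamma> s \<in> cyl" using assms unfolding local_isometry_line_def by blast
    then show ?thesis unfolding cyl_def by (cases "\<gamma> s") auto
  qed
  obtain e0 where e00: "e0 > 0" and H: "\<forall>s s'. \<bar>s - t\<bar> < e0 \<and> \<bar>s' - t\<bar> < e0 \<longrightarrow>
         cyl_dist (\<gamma> s) (\<gamma> s') = \<bar>s - s'\<bar>"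
    using assms unfolding local_isometry_line_def by meson
  have e0: "e0 > 0" "\<And>s s'. \<bar>s - t\<bar> < e0 \<Longrightarrow> \<bar>s' - t\<bar> < e0 \<Longrightarrow>
         cyl_dist (\<gamma> s) (\<gamma> s') = \<bar>s - s'\<bar>" using e00 H by auto
  define e where "e = min e0 (1/4)"
  have e: "e > 0" "e \<le> e0" "e \<le> 1/4" using e0 unfolding e_def by auto
  define \<theta> where "\<theta> s = fst (\<gamma> s)" for s
  define r where "r s = snd (\<gamma> s)" for s
  define k where "k s = round (\<theta> s - \<theta> t)" for s
  define \<delta> where "\<delta> s = \<theta> s - \<theta> t - of_int (k s)" for s
  define P where "P s = (\<delta> s, r s)" for s
  have kb: "\<bar>\<delta> s\<bar> \<le> 1/2" for s unfolding \<delta>_def k_def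
    by (metis abs_minus_commute of_int_round_abs_le)
  have cdle: "circ_dist (\<theta> s) (\<theta> s') \<le> cyl_dist (\<gamma> s) (\<gamma> s')" for s s'
    unfolding cyl_dist_def \<theta>_def by (rule real_sqrt_sum_squares_ge1)
  have small: "\<bar>\<delta> s\<bar> < 1/4" if "\<bar>s - t\<bar> < e" for s
  proof -
    have "circ_dist (\<theta> s) (\<theta> t) = \<bar>\<delta> s\<bar>"
      unfolding \<delta>_def using cd_int[OF rng rng] kb[of s] unfolding \<delta>_def \<theta>_def by simp
    moreover have "cyl_dist (\<gamma> s) (\<gamma> t) = \<bar>s - t\<bar>" using e0(2)[of s t] that e e0 by simp
    ultimately show ?thesis using cdle[of s t] that e by simp
  qed
  have iso: "dist (P s) (P s') = \<bar>s - s'\<bar>" if "\<bar>s - t\<bar> < e" "\<bar>s' - t\<bar> < e" for s s'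
  proof -
    have "\<delta> s - \<delta> s' = \<theta> s - \<theta> s' - of_int (k s - k s')" unfolding \<delta>_def by simp
    moreover have "\<bar>\<delta> s - \<delta> s'\<bar> \<le> 1/2" using small[OF that(1)] small[OF that(2)] by (simp add: abs_if split: if_split_asm)
    ultimately have "circ_dist (\<theta> s) (\<theta> s') = \<bar>\<delta> s - \<delta> s'\<bar>"
      using cd_int[OF rng rng, of s s' "k s - k s'"] unfolding \<theta>_def by simp
    then have "dist (P s) (P s') = cyl_dist (\<gamma> s) (\<gamma> s')"
      unfolding P_def dist_prod_def cyl_dist_def dist_real_def r_def \<theta>_def by simp
    then show ?thesis using e0(2)[of s s'] that e by simp
  qed
  obtain u where u: "norm u = 1" "\<And>s. \<bar>s-t\<bar> < e \<Longrightarrow> P s = P t + (s-t) *\<^sub>R u"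
    using line[of t e P, OF iso e(1)] by blast
  define a where "a = fst u"
  define b where "b = snd u"
  have ab: "a\<^sup>2 + b\<^sup>2 = 1" using u(1) unfolding a_def b_def
    by (metis norm_Pair prod.collapse real_norm_def power2_abs real_sqrt_eq_1_iff)
  have d0: "\<delta> t = 0" unfolding \<delta>_def k_def by simp
  have "snd (\<gamma> s) = snd (\<gamma> t) + b*(s-t) \<and> fst (\<gamma> s) = frac (fst (\<gamma> t) + a*(s-t))"
    if "\<bar>s-t\<bar> < e" for s
  proof -
    have "P s = P t + (s-t) *\<^sub>R u" using u(2) that by blast
    then have 1: "\<delta> s = (s-t) * a" "r s = r t + (s-t) * b" using d0 unfolding P_def a_def b_def
      by (metis add_0 fst_add fst_conv fst_scaleR real_scaleR_def, metis snd_add snd_conv snd_scaleR real_scaleR_def)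
    have "frac (\<theta> t + a*(s-t)) = \<theta> s"
      unfolding frac_unique_iff using rng[of s] 1(1) unfolding \<delta>_def \<theta>_def
      by (auto simp: algebra_simps)
    then show ?thesis using 1(2) unfolding r_def \<theta>_def by (simp add: algebra_simps)
  qed
  then show ?thesis using e ab by blast
qed



lemma frac_eqI:
  assumes "x - y \<in> \<int>" shows "frac x = frac (y::real)"
proof -
  obtain n where n: "x - y = of_int n" using assms by (auto elim: Ints_cases)
  have "x = y + of_int n" using n by simp
  then show ?thesis using frac_add_int_right[of "of_int n" y] by simp
qed

lemma frac_eqD:
  assumes "frac x = frac (y::real)" shows "x - y \<in> \<int>"
proof -
  have "x - y = of_int (floor x - floor y)" using assms unfolding frac_def by simp
  then show ?thesis by simp
qed

lemma int_small:
  assumes "(z::real) \<in> \<int>" "\<bar>z\<bar> < 1" shows "z = 0"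
proof -
  obtain n where n: "z = of_int n" using assms(1) by (auto elim: Ints_cases)
  then have "\<bar>n\<bar> < 1" using assms(2) by linarith
  then show ?thesis using n by simp
qed

definition Loc :: "(real \<Rightarrow> real \<times> real) \<Rightarrow> real \<Rightarrow> real \<Rightarrow> real \<Rightarrow> real \<Rightarrow> bool" where
  "Loc \<gamma> t a b e \<longleftrightarrow> e > 0 \<and> (\<forall>s. \<bar>s-t\<bar> < e \<longrightarrow>
           snd (\<gamma> s) = snd (\<gamma> t) + b*(s-t) \<and> fst (\<gamma> s) = frac (fst (\<gamma> t) + a*(s-t)))"

lemma LocD:
  assumes "Loc \<gamma> t a b e" "\<bar>s-t\<bar> < e"
  shows "snd (\<gamma> s) = snd (\<gamma> t) + b*(s-t)" "fst (\<gamma> s) = frac (fst (\<gamma> t) + a*(s-t))"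
  using assms unfolding Loc_def by blast+

lemma Loc_pos: "Loc \<gamma> t a b e \<Longrightarrow> e > 0" unfolding Loc_def by blast

lemma Loc_uniq:
  assumes "Loc \<gamma> t a b e" "Loc \<gamma> t a' b' e'"
  shows "a = a' \<and> b = b'"
proof -
  define m where "m = min e e'"
  have m: "m > 0" "m \<le> e" "m \<le> e'" using Loc_pos[OF assms(1)] Loc_pos[OF assms(2)] unfolding m_def by auto
  have "snd (\<gamma> (t + m/2)) = snd (\<gamma> t) + b*(m/2)" "snd (\<gamma> (t + m/2)) = snd (\<gamma> t) + b'*(m/2)"
    using LocD(1)[OF assms(1), of "t+m/2"] LocD(1)[OF assms(2), of "t+m/2"] m by auto
  then have bb: "b = b'" using m by simp
  have "a = a'"
  proof (rule ccontr)
    assume ne: "a \<noteq> a'"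
    define u where "u = min (m/2) (1/(2*\<bar>a-a'\<bar>))"
    have u: "u > 0" "u < m" "u * \<bar>a-a'\<bar> \<le> 1/2" using m ne unfolding u_def
      by (auto simp: min_def field_simps)
    have "fst (\<gamma> (t + u)) = frac (fst (\<gamma> t) + a * u)" "fst (\<gamma> (t + u)) = frac (fst (\<gamma> t) + a'*u)"
      using LocD(2)[OF assms(1), of "t+u"] LocD(2)[OF assms(2), of "t+u"] m u by auto
    then have "(fst (\<gamma> t) + a * u) - (fst (\<gamma> t) + a'*u) \<in> \<int>" using frac_eqD by metis
    then have "(a - a')*u \<in> \<int>" by (simp add: algebra_simps)
    moreover have "\<bar>(a - a')*u\<bar> < 1" using u by (simp add: abs_mult mult.commute)
    ultimately have "(a-a')*u = 0" using int_small by blast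
    then show False using ne u by simp
  qed
  then show ?thesis using bb by simp
qed

lemma Loc_shift:
  assumes "Loc \<gamma> t a b e" "\<bar>t'-t\<bar> < e"
  shows "Loc \<gamma> t' a b (e - \<bar>t'-t\<bar>)"
  unfolding Loc_def
proof (intro conjI allI impI)
  show "e - \<bar>t'-t\<bar> > 0" using assms(2) by simp
  fix s assume s: "\<bar>s - t'\<bar> < e - \<bar>t'-t\<bar>"
  then have s1: "\<bar>s-t\<bar> < e" by simp
  have A: "snd (\<gamma> s) = snd (\<gamma> t) + b*(s-t)" "fst (\<gamma> s) = frac (fst (\<gamma> t) + a*(s-t))"
    using LocD[OF assms(1) s1] by auto
  have B: "snd (\<gamma> t') = snd (\<gamma> t) + b*(t'-t)" "fst (\<gamma> t') = frac (fst (\<gamma> t) + a*(t'-t))"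
    using LocD[OF assms] by auto
  show "snd (\<gamma> s) = snd (\<gamma> t') + b*(s-t')" using A B by (simp add: algebra_simps)
  have "frac (fst (\<gamma> t') + a*(s-t')) = frac (fst (\<gamma> t) + a*(s-t))"
    apply (rule frac_eqI) unfolding B(2) frac_def by (simp add: algebra_simps)
  then show "fst (\<gamma> s) = frac (fst (\<gamma> t') + a*(s-t'))" using A by simp
qed

lemma global_form:
  assumes g: "local_isometry_line \<gamma>"
  shows "\<exists>a b c d. a\<^sup>2 + b\<^sup>2 = 1 \<and> (\<forall>s. \<gamma> s = Pair (frac (c + a * s)) (d + b * s))"
proof -
  have ex: "\<exists>a b e. a\<^sup>2 + b\<^sup>2 = 1 \<and> Loc \<gamma> t a b e" for t
    using local_affine[OF g, of t] unfolding Loc_def by blast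
  define F where "F t = (SOME p. \<exists>e. Loc \<gamma> t (fst p) (snd p) e)" for t
  have F: "\<exists>e. Loc \<gamma> t (fst (F t)) (snd (F t)) e" for t
  proof -
    obtain a b e where "Loc \<gamma> t a b e" using ex by blast
    then have "\<exists>p. \<exists>e. Loc \<gamma> t (fst p) (snd p) e" by (metis fst_conv snd_conv)
    then show ?thesis unfolding F_def by (rule someI_ex)
  qed
  have Floc: "\<exists>e>0. \<forall>s. \<bar>s-t\<bar> < e \<longrightarrow> F s = F t" for t
  proof -
    obtain e where e: "Loc \<gamma> t (fst (F t)) (snd (F t)) e" using F by blast
    have "F s = F t" if "\<bar>s-t\<bar> < e" for s
    proof -
      have 1: "Loc \<gamma> s (fst (F t)) (snd (F t)) (e - \<bar>s-t\<bar>)" using Loc_shift[OF e that] .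
      obtain e' where 2: "Loc \<gamma> s (fst (F s)) (snd (F s)) e'" using F by blast
      show ?thesis using Loc_uniq[OF 1 2] by (simp add: prod_eq_iff)
    qed
    moreover have "e > 0" using Loc_pos[OF e] .
    ultimately show ?thesis by blast
  qed
  define a where "a = fst (F 0)"
  define b where "b = snd (F 0)"
  have Fc: "F t = (a, b)" for t
  proof -
    have "fst (F t) = fst (F 0)"
      by (rule loc_const[of "\<lambda>t. fst (F t)"]) (metis Floc)
    moreover have "snd (F t) = snd (F 0)"
      by (rule loc_const[of "\<lambda>t. snd (F t)"]) (metis Floc)
    ultimately show ?thesis unfolding a_def b_def by (simp add: prod_eq_iff)
  qed
  have L: "\<exists>e. Loc \<gamma> t a b e" for t using F[of t] Fc[of t] by simp
  have ab: "a\<^sup>2 + b\<^sup>2 = 1"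
  proof -
    obtain a' b' e' where 1: "a'\<^sup>2 + b'\<^sup>2 = 1" "Loc \<gamma> 0 a' b' e'" using ex by blast
    obtain e where 2: "Loc \<gamma> 0 a b e" using L by blast
    show ?thesis using Loc_uniq[OF 1(2) 2] 1(1) by simp
  qed
  have r: "snd (\<gamma> s) - b * s = snd (\<gamma> 0) - b * 0" for s
  proof (rule loc_const[of "\<lambda>s. snd (\<gamma> s) - b * s"])
    fix t
    obtain e where e: "Loc \<gamma> t a b e" using L by blast
    have "\<forall>s. \<bar>s-t\<bar> < e \<longrightarrow> snd (\<gamma> s) - b * s = snd (\<gamma> t) - b * t"
    proof (intro allI impI)
      fix s assume "\<bar>s-t\<bar> < e"
      from LocD(1)[OF e this] show "snd (\<gamma> s) - b * s = snd (\<gamma> t) - b * t"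
        by (simp add: algebra_simps)
    qed
    then show "\<exists>e>0. \<forall>s. \<bar>s-t\<bar> < e \<longrightarrow> snd (\<gamma> s) - b * s = snd (\<gamma> t) - b * t"
      using Loc_pos[OF e] by blast
  qed
  have th: "frac (fst (\<gamma> s) - a * s) = frac (fst (\<gamma> 0) - a * 0)" for s
  proof (rule loc_const[of "\<lambda>s. frac (fst (\<gamma> s) - a * s)"])
    fix t
    obtain e where e: "Loc \<gamma> t a b e" using L by blast
    have "frac (fst (\<gamma> s) - a * s) = frac (fst (\<gamma> t) - a * t)" if "\<bar>s-t\<bar> < e" for s
    proof -
      have "fst (\<gamma> s) = frac (fst (\<gamma> t) + a*(s-t))" using LocD(2)[OF e that] .
      then have "(fst (\<gamma> s) - a * s) - (fst (\<gamma> t) - a * t) = - of_int (floor (fst (\<gamma> t) + a*(s-t)))"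
        unfolding frac_def by (simp add: algebra_simps)
      then show ?thesis by (intro frac_eqI) simp
    qed
    then show "\<exists>e>0. \<forall>s. \<bar>s-t\<bar> < e \<longrightarrow> frac (fst (\<gamma> s) - a * s) = frac (fst (\<gamma> t) - a * t)"
      using Loc_pos[OF e] by blast
  qed
  have rng: "fst (\<gamma> s) \<in> {0..<1}" for s
  proof -
    have "\<gamma> s \<in> cyl" using g unfolding local_isometry_line_def by blast
    then show ?thesis unfolding cyl_def by (cases "\<gamma> s") auto
  qed
  have "\<gamma> s = Pair (frac (fst (\<gamma> 0) + a * s)) (snd (\<gamma> 0) + b * s)" for s
  proof -
    have "frac (fst (\<gamma> s) - a * s) = fst (\<gamma> 0)" using th[of s] rng[of 0] by (simp add: frac_eq)
    then have "(fst (\<gamma> s) - a * s) - fst (\<gamma> 0) \<in> \<int>" unfolding frac_unique_iff by blast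
    then have "(fst (\<gamma> 0) + a * s) - fst (\<gamma> s) \<in> \<int>"
      by (metis Ints_minus minus_diff_eq diff_diff_eq2 add.commute diff_diff_eq)
    then have "frac (fst (\<gamma> 0) + a * s) = fst (\<gamma> s)" unfolding frac_unique_iff using rng[of s] by simp
    moreover have "snd (\<gamma> s) = snd (\<gamma> 0) + b * s" using r[of s] by simp
    ultimately show ?thesis by (metis prod.collapse)
  qed
  then show ?thesis using ab by blast
qed



lemma slant_meets:
  assumes "slant G" "\<theta>0 \<in> {0..<1}"
  shows "\<exists>p q. p \<noteq> q \<and> p \<in> G \<and> q \<in> G \<and> fst p = \<theta>0 \<and> fst q = \<theta>0"
proof -
  obtain \<gamma> where g: "local_isometry_line \<gamma>" "G = range \<gamma>"
    using assms(1) unfolding slant_def geodesic_def by blast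
  obtain a b c d where ab: "a\<^sup>2 + b\<^sup>2 = 1" and gf: "\<And>s. \<gamma> s = Pair (frac (c + a * s)) (d + b * s)"
    using global_form[OF g(1)] by blast
  have nv: "\<not> vertical G" and nh: "\<not> horizontal G" using assms(1) unfolding slant_def by auto
  have a0: "a \<noteq> 0"
  proof
    assume a: "a = 0"
    then have b: "b \<noteq> 0" using ab by auto
    have "G = {frac c} \<times> UNIV"
    proof
      show "G \<subseteq> {frac c} \<times> UNIV" using g(2) gf a by auto
      show "{frac c} \<times> UNIV \<subseteq> G"
      proof
        fix p assume "p \<in> {frac c} \<times> (UNIV::real set)"
        then obtain y where p: "p = (frac c, y)" by auto
        have "\<gamma> ((y - d)/b) = p" using gf a b p by simp
        then show "p \<in> G" using g(2) by (metis rangeI)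
      qed
    qed
    moreover have "frac c \<in> {0..<1}" by (simp add: frac_lt_1)
    ultimately show False using nv unfolding vertical_def by blast
  qed
  have b0: "b \<noteq> 0"
  proof
    assume b: "b = 0"
    have "G = {0..<1} \<times> {d}"
    proof
      show "G \<subseteq> {0..<1} \<times> {d}" using g(2) gf b by (auto simp: frac_lt_1)
      show "{0..<1} \<times> {d} \<subseteq> G"
      proof
        fix p :: "real \<times> real" assume "p \<in> {0..<1} \<times> {d}"
        then obtain x where p: "p = (x, d)" "0 \<le> x" "x < 1" by auto
        have "\<gamma> ((x - c)/a) = (frac x, d)" using gf a0 b by simp
        also have "frac x = x" using p by (simp add: frac_eq)
        finally show "p \<in> G" using g(2) p by (metis rangeI)
      qed
    qed
    then show False using nh unfolding horizontal_def by blast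
  qed
  define s1 where "s1 = (\<theta>0 - c)/a"
  define s2 where "s2 = (\<theta>0 + 1 - c)/a"
  have f0: "frac \<theta>0 = \<theta>0" using assms(2) by (simp add: frac_eq)
  have "frac (\<theta>0 + 1) = \<theta>0" using f0 by (simp add: frac_add_int_right)
  then have 1: "\<gamma> s1 = (\<theta>0, d + b * s1)" "\<gamma> s2 = (\<theta>0, d + b * s2)"
    using gf a0 f0 unfolding s1_def s2_def by auto
  have "s1 \<noteq> s2" using a0 unfolding s1_def s2_def by (simp add: divide_simps)
  then have "\<gamma> s1 \<noteq> \<gamma> s2" using 1 b0 by simp
  then show ?thesis using 1 g(2) by (metis fst_conv rangeI)
qed

lemma vertical_geod:
  assumes "vertical G" shows "geodesic G"
proof -
  obtain \<theta> where th: "\<theta> \<in> {0..<1}" "G = {\<theta>} \<times> UNIV" using assms unfolding vertical_def by blast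
  define \<gamma> where "\<gamma> t = (\<theta>, t)" for t :: real
  have "local_isometry_line \<gamma>"
    unfolding local_isometry_line_def
  proof (intro conjI allI)
    show "range \<gamma> \<subseteq> cyl" using th unfolding \<gamma>_def cyl_def by auto
    fix t
    show "\<exists>e>0. \<forall>s s'. \<bar>s - t\<bar> < e \<and> \<bar>s' - t\<bar> < e \<longrightarrow> cyl_dist (\<gamma> s) (\<gamma> s') = \<bar>s - s'\<bar>"
      by (rule exI[of _ 1]) (simp add: \<gamma>_def cyl_dist_def circ_dist_def)
  qed
  moreover have "G = range \<gamma>" using th unfolding \<gamma>_def by auto
  ultimately show ?thesis unfolding geodesic_def by blast
qed

theorem lemma4p3:
  fixes f :: "real \<times> real \<Rightarrow> real \<times> real" and \<theta>\<^sub>0 :: real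
  assumes "\<theta>\<^sub>0 \<in> {0..<1}"
    and "geodesic_preserving f"
    and "f ` ({\<theta>\<^sub>0} \<times> UNIV) = {\<theta>\<^sub>0} \<times> UNIV"
    and "f (\<theta>\<^sub>0, 0) = (\<theta>\<^sub>0, 0)"
    and "f (\<theta>\<^sub>0, 1) = (\<theta>\<^sub>0, 1)"
  shows "(\<forall>G. vertical G \<longrightarrow> vertical (f ` G)) \<and> (\<forall>G. slant G \<longrightarrow> slant (f ` G))"
proof -
  define v where "v = {\<theta>\<^sub>0} \<times> (UNIV :: real set)"
  have fv: "f ` v = v" using assms(3) unfolding v_def .
  have inj: "inj_on f cyl" and gp: "\<And>G. geodesic G \<Longrightarrow> geodesic (f ` G)"
    using assms(2) unfolding geodesic_preserving_def bij_betw_def by auto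
  have vc: "v \<subseteq> cyl" using assms(1) unfolding v_def cyl_def by auto
  have gc: "G \<subseteq> cyl" if "geodesic G" for G
    using that unfolding geodesic_def local_isometry_line_def by auto
  have vertc: "G \<subseteq> cyl" if "vertical G" for G
    using that unfolding vertical_def cyl_def by auto
  have slant_v: "G \<inter> v \<noteq> {}" if "slant G" for G
    using slant_meets[OF that assms(1)] unfolding v_def by (metis IntI mem_Times_iff prod.collapse singletonI UNIV_I empty_iff)
  have disj: "f ` G \<inter> v = {}" if "G \<subseteq> cyl" "G \<inter> v = {}" for G
  proof (rule ccontr)
    assume "f ` G \<inter> v \<noteq> {}"
    then obtain p where p: "p \<in> G" "f p \<in> v" by auto
    then obtain q where q: "q \<in> v" "f q = f p" using fv by (metis imageE)
    have "q = p" using inj q p that(1) vc by (meson inj_onD subsetD)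
    then show False using p q that(2) by auto
  qed
  have part1: "vertical (f ` G)" if vG: "vertical G" for G
  proof (cases "G = v")
    case True
    then show ?thesis using fv assms(1) unfolding v_def vertical_def by auto
  next
    case False
    obtain \<theta> where th: "\<theta> \<in> {0..<1}" "G = {\<theta>} \<times> UNIV" using vG unfolding vertical_def by blast
    then have "\<theta> \<noteq> \<theta>\<^sub>0" using False unfolding v_def by auto
    then have "G \<inter> v = {}" using th unfolding v_def by auto
    then have d: "f ` G \<inter> v = {}" using disj vertc[OF vG] by blast
    have geo: "geodesic (f ` G)" using gp vertical_geod[OF vG] by blast
    show ?thesis
    proof (rule ccontr)
      assume nv: "\<not> vertical (f ` G)"
      show False
      proof (cases "horizontal (f ` G)")
        case True
        then obtain r where "f ` G = {0..<1} \<times> {r}" unfolding horizontal_def by blast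
        then have "(\<theta>\<^sub>0, r) \<in> f ` G \<inter> v" using assms(1) unfolding v_def by auto
        then show False using d by blast
      next
        case False
        then have "slant (f ` G)" using geo nv unfolding slant_def by blast
        then show False using slant_v d by blast
      qed
    qed
  qed
  have part2: "slant (f ` G)" if sG: "slant G" for G
  proof -
    have geo: "geodesic G" using sG unfolding slant_def by blast
    have Gc: "G \<subseteq> cyl" using gc[OF geo] .
    have geo': "geodesic (f ` G)" using gp[OF geo] .
    obtain p q where pq: "p \<noteq> q" "p \<in> G" "q \<in> G" "fst p = \<theta>\<^sub>0" "fst q = \<theta>\<^sub>0"
      using slant_meets[OF sG assms(1)] by blast
    have pv: "p \<in> v" "q \<in> v" using pq unfolding v_def by (auto simp: mem_Times_iff)
    have fpv: "f p \<in> v" "f q \<in> v" using pv fv by auto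
    have fpq: "f p \<noteq> f q" using inj pq Gc by (meson inj_onD subsetD)
    have nv: "\<not> vertical (f ` G)"
    proof
      assume "vertical (f ` G)"
      then obtain \<theta> where th: "f ` G = {\<theta>} \<times> UNIV" unfolding vertical_def by blast
      have "f p \<in> f ` G" using pq by auto
      then have "fst (f p) = \<theta>" using th by auto
      moreover have "fst (f p) = \<theta>\<^sub>0" using fpv unfolding v_def by auto
      ultimately have "f ` G = v" using th unfolding v_def by simp
      then have "f ` G = f ` v" using fv by simp
      then have "G = v" using inj_on_image_eq_iff[OF inj Gc vc] by blast
      then have "vertical G" using assms(1) unfolding v_def vertical_def by blast
      then show False using sG unfolding slant_def by blast
    qed
    have nh: "\<not> horizontal (f ` G)"
    proof
      assume "horizontal (f ` G)"
      then obtain r where th: "f ` G = {0..<1} \<times> {r}" unfolding horizontal_def by blast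
      have "f p \<in> f ` G" "f q \<in> f ` G" using pq by auto
      then have "snd (f p) = r" "snd (f q) = r" using th by auto
      moreover have "fst (f p) = \<theta>\<^sub>0" "fst (f q) = \<theta>\<^sub>0" using fpv unfolding v_def by auto
      ultimately have "f p = f q" by (simp add: prod_eq_iff)
      then show False using fpq by blast
    qed
    show ?thesis using geo' nv nh unfolding slant_def by blast
  qed
  show ?thesis using part1 part2 by blast
qed

end
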